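(* Let $n\ge1$ and let $\mathcal{S}$ be a discrete subgroup of $O(n+1)$ satisfying the spanning property. For any $\Omega\in\mathcal{K}_0(\mathcal{S})$ that is not a polytope, there exists an $\mathcal{S}$-invariant polytope $P\supset\Omega$ such that $\mathcal{F}_{-\infty}(\Omega)<\mathcal{F}_{-\infty}(P)$.
   Context: $\mathcal{K}_0(\mathcal{S})$: convex bodies in $\mathbb{R}^{n+1}$ containing the origin and invariant under all $\phi\in\mathcal{S}$. $\mathcal{F}_{-\infty}(\Omega)=V(\Omega)/(\min_{\mathbb{S}^n}h_\Omega)^{n+1}$, $h_\Omega$ the support function, $V(\Omega)=(n+1)|\Omega|$. Spanning property: for every $a\in\mathbb{S}^n$, $\mathrm{conv}\{\phi(a):\phi\in\mathcal{S}\}$ is a non-degenerate $(n+1)$-dimensional polytope. *)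

theory Defs
  imports "HOL-Analysis.Analysis"
begin

definition orth_subgroup :: "('a::euclidean_space \<Rightarrow> 'a) set \<Rightarrow> bool" where
  "orth_subgroup S \<longleftrightarrow> (\<forall>\<phi>\<in>S. orthogonal_transformation \<phi>) \<and> id \<in> S \<and>
     (\<forall>\<phi>\<in>S. \<forall>\<psi>\<in>S. \<phi> \<circ> \<psi> \<in> S) \<and> (\<forall>\<phi>\<in>S. inv \<phi> \<in> S)"

definition discrete_maps :: "('a::euclidean_space \<Rightarrow> 'a) set \<Rightarrow> bool" where
  "discrete_maps S \<longleftrightarrow> (\<forall>\<phi>\<in>S. \<exists>e>0. \<forall>\<psi>\<in>S. onorm (\<lambda>x. \<psi> x - \<phi> x) < e \<longrightarrow> \<psi> = \<phi>)"

definition spanning_property :: "('a::euclidean_space \<Rightarrow> 'a) set \<Rightarrow> bool" where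
  "spanning_property S \<longleftrightarrow> (\<forall>a. norm a = 1 \<longrightarrow>
      polytope (convex hull {\<phi> a |\<phi>. \<phi> \<in> S}) \<and>
      aff_dim (convex hull {\<phi> a |\<phi>. \<phi> \<in> S}) = int DIM('a))"

definition convex_body :: "'a::euclidean_space set \<Rightarrow> bool" where
  "convex_body K \<longleftrightarrow> compact K \<and> convex K \<and> interior K \<noteq> {}"

definition invariant_under :: "('a \<Rightarrow> 'a) set \<Rightarrow> 'a set \<Rightarrow> bool" where
  "invariant_under S K \<longleftrightarrow> (\<forall>\<phi>\<in>S. \<phi> ` K = K)"

definition K0 :: "('a::euclidean_space \<Rightarrow> 'a) set \<Rightarrow> 'a set set" where
  "K0 S = {K. convex_body K \<and> 0 \<in> K \<and> invariant_under S K}"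

definition support_fun :: "'a::euclidean_space set \<Rightarrow> 'a \<Rightarrow> real" where
  "support_fun K u = (SUP x\<in>K. x \<bullet> u)"

text \<open>V(K) = (n+1)|K| where n+1 = DIM('a).\<close>
definition Vol :: "'a::euclidean_space set \<Rightarrow> real" where
  "Vol K = real DIM('a) * measure lebesgue K"

definition F_minf :: "'a::euclidean_space set \<Rightarrow> real" where
  "F_minf K = Vol K / (INF u\<in>sphere (0::'a) 1. support_fun K u) ^ DIM('a)"

end

theory Submission
  imports Defs
begin

lemma grp:
  assumes "orth_subgroup S" "\<phi> \<in> S"
  shows "orthogonal_transformation \<phi>" "inv \<phi> \<in> S" "\<phi> (inv \<phi> z) = z" "inv \<phi> (\<phi> z) = z"
    "\<phi> x \<bullet> \<phi> y = x \<bullet> y" "norm (\<phi> x) = norm x"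
proof -
  show ot: "orthogonal_transformation \<phi>" using assms by (auto simp: orth_subgroup_def)
  show "inv \<phi> \<in> S" using assms by (auto simp: orth_subgroup_def)
  have b: "bij \<phi>" using ot orthogonal_transformation_bij by blast
  show "\<phi> (inv \<phi> z) = z" using b by (simp add: bij_is_surj surj_f_inv_f)
  show "inv \<phi> (\<phi> z) = z" using b by (simp add: bij_is_inj inv_f_f)
  show "\<phi> x \<bullet> \<phi> y = x \<bullet> y" using ot by (simp add: orthogonal_transformation_def)
  show "norm (\<phi> x) = norm x" using ot by (simp add: orthogonal_transformation_norm)
qed

lemma comp_in: "orth_subgroup S \<Longrightarrow> \<phi> \<in> S \<Longrightarrow> \<psi> \<in> S \<Longrightarrow> \<phi> \<circ> \<psi> \<in> S"
  by (auto simp: orth_subgroup_def)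

lemma id_in: "orth_subgroup S \<Longrightarrow> id \<in> S"
  by (auto simp: orth_subgroup_def)

lemma orbit_inv:
  assumes "orth_subgroup S" "\<psi> \<in> S"
  shows "\<psi> ` {\<phi> a |\<phi>. \<phi> \<in> S} = {\<phi> a |\<phi>. \<phi> \<in> S}"
proof
  show "\<psi> ` {\<phi> a |\<phi>. \<phi> \<in> S} \<subseteq> {\<phi> a |\<phi>. \<phi> \<in> S}"
  proof
    fix y assume "y \<in> \<psi> ` {\<phi> a |\<phi>. \<phi> \<in> S}"
    then obtain \<phi> where "\<phi> \<in> S" "y = \<psi> (\<phi> a)" by auto
    then have "\<psi> \<circ> \<phi> \<in> S" "y = (\<psi> \<circ> \<phi>) a" using comp_in[OF assms(1) assms(2)] by auto
    then show "y \<in> {\<phi> a |\<phi>. \<phi> \<in> S}" by blast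
  qed
  show "{\<phi> a |\<phi>. \<phi> \<in> S} \<subseteq> \<psi> ` {\<phi> a |\<phi>. \<phi> \<in> S}"
  proof
    fix y assume "y \<in> {\<phi> a |\<phi>. \<phi> \<in> S}"
    then obtain \<phi> where "\<phi> \<in> S" "y = \<phi> a" by auto
    moreover have "inv \<psi> \<circ> \<phi> \<in> S" using comp_in[OF assms(1) grp(2)[OF assms] \<open>\<phi> \<in> S\<close>] .
    moreover have "y = \<psi> ((inv \<psi> \<circ> \<phi>) a)" using grp(3)[OF assms] \<open>y = \<phi> a\<close> by simp
    ultimately show "y \<in> \<psi> ` {\<phi> a |\<phi>. \<phi> \<in> S}" by blast
  qed
qed

lemma unit_eq:
  fixes v y :: "'a::euclidean_space"
  assumes "norm v \<le> 1" "norm y = 1" "y \<bullet> v \<ge> 1"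
  shows "v = y"
proof -
  have "norm (v - y)^2 = v \<bullet> v - 2 * (y \<bullet> v) + y \<bullet> y"
    by (simp add: power2_norm_eq_inner inner_diff algebra_simps inner_commute)
  also have "v \<bullet> v = (norm v)^2" by (simp add: power2_norm_eq_inner)
  also have "y \<bullet> y = 1" using assms(2) by (simp add: power2_norm_eq_inner[symmetric])
  finally have "norm (v - y)^2 \<le> 0"
    using assms power_le_one[OF norm_ge_zero assms(1), of 2] by linarith
  then show ?thesis by simp
qed

lemma orbit_finite:
  assumes "orth_subgroup S" "spanning_property S" "norm a = 1"
  shows "finite {\<phi> a |\<phi>. \<phi> \<in> S}"
proof -
  let ?O = "{\<phi> a |\<phi>. \<phi> \<in> S}"
  have "polytope (convex hull ?O)" using assms by (auto simp: spanning_property_def)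
  then obtain V where V: "finite V" "convex hull ?O = convex hull V" by (auto simp: polytope_def)
  have sub: "convex hull ?O \<subseteq> cball 0 1"
    by (rule hull_minimal) (use grp(6)[OF assms(1)] assms(3) in auto)
  have "?O \<subseteq> V"
  proof
    fix y assume yO: "y \<in> ?O"
    then have ny: "norm y = 1" using grp(6)[OF assms(1)] assms(3) by auto
    have "y extreme_point_of (convex hull ?O)"
      unfolding extreme_point_of_def
    proof (intro conjI ballI notI)
      show "y \<in> convex hull ?O" using yO by (simp add: hull_inc)
      fix p q assume p: "p \<in> convex hull ?O" and q: "q \<in> convex hull ?O" and yin: "y \<in> open_segment p q"
      then obtain t where t: "0 < t" "t < 1" "y = (1 - t) *\<^sub>R p + t *\<^sub>R q" "p \<noteq> q"
        by (auto simp: in_segment)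
      have np: "norm p \<le> 1" "norm q \<le> 1" using p q sub by auto
      have ip: "y \<bullet> p \<le> 1" "y \<bullet> q \<le> 1"
        using norm_cauchy_schwarz[of y p] norm_cauchy_schwarz[of y q] np ny by auto
      have "1 = y \<bullet> y" using ny by (simp add: power2_norm_eq_inner[symmetric])
      also have "\<dots> = (1 - t) * (y \<bullet> p) + t * (y \<bullet> q)" using t(3)
        by (metis inner_add_right inner_scaleR_right)
      finally have e: "(1 - t) * (1 - y \<bullet> p) + t * (1 - y \<bullet> q) = 0"
        by (simp add: algebra_simps)
      have g1: "(1 - t) * (1 - y \<bullet> p) \<ge> 0" using t ip by simp
      have g2: "t * (1 - y \<bullet> q) \<ge> 0" using t ip by simp
      have "(1 - t) * (1 - y \<bullet> p) = 0" "t * (1 - y \<bullet> q) = 0" using e g1 g2 by linarith+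
      then have "y \<bullet> p = 1 \<and> y \<bullet> q = 1" using t(1,2) by auto
      then have "p = y" "q = y" using unit_eq[OF np(1) ny] unit_eq[OF np(2) ny] by auto
      then show False using t(4) by simp
    qed
    then show "y \<in> V" using V(2) extreme_point_of_convex_hull by metis
  qed
  then show ?thesis using V(1) finite_subset by blast
qed


lemma centroid_zero:
  fixes a :: "'a::euclidean_space"
  assumes "DIM('a) \<ge> 2" "orth_subgroup S" "spanning_property S" "norm a = 1"
  shows "(\<Sum>y\<in>{\<phi> a |\<phi>. \<phi> \<in> S}. y) = 0"
proof (rule ccontr)
  let ?O = "{\<phi> a |\<phi>. \<phi> \<in> S}"
  define c where "c = (\<Sum>y\<in>?O. y)"
  assume "(\<Sum>y\<in>?O. y) \<noteq> 0"
  then have c0: "c \<noteq> 0" by (simp add: c_def)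
  have fix_c: "\<psi> c = c" if "\<psi> \<in> S" for \<psi>
  proof -
    have lin: "linear \<psi>" using grp(1)[OF assms(2) that] orthogonal_transformation_linear by blast
    have inj: "inj \<psi>" using grp(1)[OF assms(2) that] orthogonal_transformation_inj by blast
    have "\<psi> c = (\<Sum>y\<in>?O. \<psi> y)" unfolding c_def by (simp add: linear_sum[OF lin])
    also have "\<dots> = (\<Sum>y\<in>\<psi> ` ?O. y)"
      by (subst sum.reindex) (use inj in \<open>auto simp: inj_on_def\<close>)
    also have "\<dots> = c" unfolding c_def orbit_inv[OF assms(2) that] ..
    finally show ?thesis .
  qed
  define u where "u = (1 / norm c) *\<^sub>R c"
  have nu: "norm u = 1" using c0 by (simp add: u_def)
  have fu: "\<psi> u = u" if "\<psi> \<in> S" for \<psi>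
    using orthogonal_transformation_scaleR[OF grp(1)[OF assms(2) that]] fix_c[OF that] by (simp add: u_def)
  have "{\<phi> u |\<phi>. \<phi> \<in> S} = {u}"
  proof
    show "{\<phi> u |\<phi>. \<phi> \<in> S} \<subseteq> {u}" using fu by blast
    show "{u} \<subseteq> {\<phi> u |\<phi>. \<phi> \<in> S}" 
    proof -
      have "id u \<in> {\<phi> u |\<phi>. \<phi> \<in> S}" using id_in[OF assms(2)] by blast
      then show ?thesis by simp
    qed
  qed
  then have "aff_dim (convex hull {\<phi> u |\<phi>. \<phi> \<in> S}) = 0"
    by (simp only: convex_hull_singleton aff_dim_sing)
  moreover have "aff_dim (convex hull {\<phi> u |\<phi>. \<phi> \<in> S}) = int DIM('a)"
    using assms(3) nu unfolding spanning_property_def by blast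
  ultimately have "int DIM('a) = 0" by argo
  then show False using assms(1) by linarith
qed

lemma zero_interior:
  fixes a :: "'a::euclidean_space"
  assumes "DIM('a) \<ge> 2" "orth_subgroup S" "spanning_property S" "norm a = 1"
  shows "0 \<in> interior (convex hull {\<phi> a |\<phi>. \<phi> \<in> S})"
proof (rule ccontr)
  let ?O = "{\<phi> a |\<phi>. \<phi> \<in> S}"
  let ?C = "convex hull ?O"
  assume n0: "0 \<notin> interior ?C"
  have ad: "aff_dim ?C = int DIM('a)" using assms(3,4) unfolding spanning_property_def by blast
  have ne: "?O \<noteq> {}" using id_in[OF assms(2)] by auto
  have "interior ?C = rel_interior ?C" using ad by (simp add: interior_rel_interior_gen)
  also have "\<dots> \<noteq> {}" using ne by (simp add: rel_interior_eq_empty)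
  finally have intne: "interior ?C \<noteq> {}" .
  obtain w where w: "w \<noteq> 0" "\<forall>x\<in>interior ?C. 0 \<le> inner w x"
    using separating_hyperplane_set_0[OF convex_interior[OF convex_convex_hull] n0] by blast
  have isub: "interior ?C \<subseteq> {x. inner w x \<ge> 0}" using w(2) by blast
  have "?C \<subseteq> closure ?C" by (rule closure_subset)
  also have "\<dots> = closure (interior ?C)" using convex_closure_interior[OF convex_convex_hull intne] by simp
  also have "\<dots> \<subseteq> {x. inner w x \<ge> 0}"
    by (rule closure_minimal[OF isub closed_halfspace_ge])
  finally have Csub: "?C \<subseteq> {x. inner w x \<ge> 0}" .
  have ge: "\<forall>y\<in>?O. 0 \<le> inner w y"
  proof
    fix y assume "y \<in> ?O"
    then have "y \<in> ?C" by (rule hull_inc)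
    then show "0 \<le> inner w y" using Csub by blast
  qed
  have fin: "finite ?O" using orbit_finite[OF assms(2,3,4)] .
  have "(\<Sum>y\<in>?O. inner w y) = inner w (\<Sum>y\<in>?O. y)" by (simp add: inner_sum_right)
  also have "\<dots> = 0" using centroid_zero[OF assms] by simp
  finally have "\<forall>y\<in>?O. inner w y = 0" using sum_nonneg_eq_0_iff[OF fin] ge by blast
  then have "?O \<subseteq> {x. inner w x = 0}" by blast
  then have "?C \<subseteq> {x. inner w x = 0}" by (rule hull_minimal) (rule convex_hyperplane)
  then have "aff_dim ?C \<le> aff_dim {x. inner w x = 0}" by (rule aff_dim_subset)
  also have "\<dots> = int DIM('a) - 1" using w(1) by simp
  finally show False using ad by simp
qed


lemma P_props:
  fixes a :: "'a::euclidean_space"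
  assumes "DIM('a) \<ge> 2" "orth_subgroup S" "spanning_property S" "norm a = 1"
    and R: "R > 0"
  defines "P \<equiv> {x. \<forall>y\<in>{\<phi> a |\<phi>. \<phi> \<in> S}. inner y x \<le> R}"
  shows "polytope P" "invariant_under S P" "cball 0 R \<subseteq> P" "\<And>x. x \<in> P \<Longrightarrow> inner a x \<le> R"
proof -
  let ?O = "{\<phi> a |\<phi>. \<phi> \<in> S}"
  let ?C = "convex hull ?O"
  have fin: "finite ?O" using orbit_finite[OF assms(2,3,4)] .
  have aO: "a \<in> ?O"
  proof -
    have "id a \<in> ?O" using id_in[OF assms(2)] by blast
    then show ?thesis by simp
  qed
  show "\<And>x. x \<in> P \<Longrightarrow> inner a x \<le> R" using aO unfolding P_def by blast
  have Peq: "P = \<Inter> ((\<lambda>y. {x. inner y x \<le> R}) ` ?O)" unfolding P_def by blast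
  have poly: "polyhedron P" unfolding Peq
    by (rule polyhedron_Inter) (use fin polyhedron_halfspace_le in auto)
  obtain e where e: "e > 0" "cball 0 e \<subseteq> ?C"
    using zero_interior[OF assms(1-4)] mem_interior_cball by blast
  have bnd: "norm x \<le> R / e" if xP: "x \<in> P" for x
  proof (cases "x = 0")
    case True then show ?thesis using R e by simp
  next
    case False
    have "?O \<subseteq> {z. inner x z \<le> R}" using xP unfolding P_def by (auto simp: inner_commute)
    then have Csub: "?C \<subseteq> {z. inner x z \<le> R}" by (rule hull_minimal) (rule convex_halfspace_le)
    define w where "w = (e / norm x) *\<^sub>R x"
    have "norm w = e" using False e by (simp add: w_def)
    then have "w \<in> ?C" using e(2) by auto
    then have "inner x w \<le> R" using Csub by blast
    moreover have "inner x w = e * norm x"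
      using False by (simp add: w_def power2_norm_eq_inner[symmetric] power2_eq_square)
    ultimately have "e * norm x \<le> R" by simp
    then show ?thesis using e(1) by (simp add: field_simps mult.commute)
  qed
  have "bounded P" unfolding bounded_iff using bnd by blast
  then show "polytope P" using poly polytope_eq_bounded_polyhedron by blast
  show "cball 0 R \<subseteq> P"
  proof
    fix x :: 'a assume "x \<in> cball 0 R"
    then have nx: "norm x \<le> R" by simp
    have "inner y x \<le> R" if "y \<in> ?O" for y
    proof -
      have "norm y = 1" using that grp(6)[OF assms(2)] assms(4) by auto
      then show ?thesis using norm_cauchy_schwarz[of y x] nx by simp
    qed
    then show "x \<in> P" unfolding P_def by blast
  qed
  have mapsto: "\<psi> x \<in> P" if "\<psi> \<in> S" "x \<in> P" for \<psi> x
  proof -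
    have "inner y (\<psi> x) \<le> R" if yO: "y \<in> ?O" for y
    proof -
      have "inv \<psi> y \<in> inv \<psi> ` ?O" using yO by blast
      then have iy: "inv \<psi> y \<in> ?O" using orbit_inv[OF assms(2) grp(2)[OF assms(2) \<open>\<psi> \<in> S\<close>]] by simp
      have "inner y (\<psi> x) = inner (\<psi> (inv \<psi> y)) (\<psi> x)" using grp(3)[OF assms(2) \<open>\<psi> \<in> S\<close>] by simp
      also have "\<dots> = inner (inv \<psi> y) x" using grp(5)[OF assms(2) \<open>\<psi> \<in> S\<close>] by simp
      also have "\<dots> \<le> R" using iy \<open>x \<in> P\<close> unfolding P_def by blast
      finally show ?thesis .
    qed
    then show ?thesis unfolding P_def by blast
  qed
  show "invariant_under S P" unfolding invariant_under_def
  proof (intro ballI equalityI subsetI)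
    fix \<psi> z assume "\<psi> \<in> S" "z \<in> \<psi> ` P"
    then show "z \<in> P" using mapsto by blast
  next
    fix \<psi> z assume ps: "\<psi> \<in> S" and "z \<in> P"
    then have "inv \<psi> z \<in> P" using mapsto grp(2)[OF assms(2) ps] by blast
    moreover have "z = \<psi> (inv \<psi> z)" using grp(3)[OF assms(2) ps] by simp
    ultimately show "z \<in> \<psi> ` P" by blast
  qed
qed


lemma sup_ge:
  fixes K :: "'a::euclidean_space set"
  assumes "bounded K" "x \<in> K"
  shows "inner x u \<le> support_fun K u"
proof -
  obtain B where B: "\<forall>x\<in>K. norm x \<le> B" using assms(1) bounded_iff by blast
  have "bdd_above ((\<lambda>x. x \<bullet> u) ` K)"
  proof (rule bdd_aboveI2)
    fix x assume "x \<in> K"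
    then show "x \<bullet> u \<le> B * norm u"
      using norm_cauchy_schwarz[of x u] B mult_right_mono[of "norm x" B "norm u"] by force
  qed
  then show ?thesis unfolding support_fun_def using assms(2) by (rule cSUP_upper2) simp
qed

lemma sup_le:
  fixes K :: "'a::euclidean_space set"
  assumes "K \<noteq> {}" "\<And>x. x \<in> K \<Longrightarrow> inner x u \<le> c"
  shows "support_fun K u \<le> c"
  unfolding support_fun_def using assms by (rule cSUP_least)

lemma sup_cont:
  fixes K :: "'a::euclidean_space set"
  assumes "bounded K" "K \<noteq> {}"
  shows "continuous_on A (support_fun K)"
proof -
  obtain B where B: "\<forall>x\<in>K. norm x \<le> B" using assms(1) bounded_iff by blast
  have B0: "B \<ge> 0" using B assms(2) norm_ge_zero order_trans by blast
  have one: "support_fun K u \<le> support_fun K v + B * norm (u - v)" for u v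
  proof (rule sup_le[OF assms(2)])
    fix x assume x: "x \<in> K"
    have "inner x u = inner x v + inner x (u - v)" by (simp add: inner_diff_right)
    also have "inner x (u - v) \<le> B * norm (u - v)"
      using norm_cauchy_schwarz[of x "u - v"] B x mult_right_mono[of "norm x" B "norm (u - v)"] by force
    also have "inner x v \<le> support_fun K v" by (rule sup_ge[OF assms(1) x])
    finally show "inner x u \<le> support_fun K v + B * norm (u - v)" by simp
  qed
  have "B-lipschitz_on A (support_fun K)"
  proof (rule lipschitz_onI)
    fix u v assume "u \<in> A" "v \<in> A"
    have "support_fun K u - support_fun K v \<le> B * norm (u - v)" using one[of u v] by simp
    moreover have "support_fun K v - support_fun K u \<le> B * norm (u - v)"
      using one[of v u] by (simp add: norm_minus_commute)
    ultimately show "dist (support_fun K u) (support_fun K v) \<le> B * dist u v"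
      by (simp add: dist_real_def dist_norm abs_le_iff)
  qed (rule B0)
  then show ?thesis by (rule lipschitz_on_continuous_on)
qed

lemma ball_meas_pos: "r > 0 \<Longrightarrow> measure lebesgue (ball (c::'a::euclidean_space) r) > 0"
  using content_ball_pos[of r c] by (simp add: measure_completion)


theorem lemma4p3:
  fixes S :: "('a::euclidean_space \<Rightarrow> 'a) set" and \<Omega> :: "'a set"
  assumes "DIM('a) \<ge> 2"
    and "orth_subgroup S" and "discrete_maps S" and "spanning_property S"
    and "\<Omega> \<in> K0 S" and "\<not> polytope \<Omega>"
  shows "\<exists>P. polytope P \<and> invariant_under S P \<and> \<Omega> \<subseteq> P \<and> F_minf \<Omega> < F_minf P"
proof -
  have cb: "compact \<Omega>" "convex \<Omega>" "interior \<Omega> \<noteq> {}" "0 \<in> \<Omega>" "invariant_under S \<Omega>"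
    using assms(5) by (auto simp: K0_def convex_body_def)
  have bO: "bounded \<Omega>" using cb(1) compact_imp_bounded by blast
  have neO: "\<Omega> \<noteq> {}" using cb(4) by blast
  define h where "h = support_fun \<Omega>"
  have h0: "h u \<ge> 0" for u using sup_ge[OF bO cb(4), of u] by (simp add: h_def)
  obtain b :: 'a where "b \<in> Basis" using nonempty_Basis by blast
  then have sne: "sphere (0::'a) 1 \<noteq> {}" by (metis norm_Basis mem_sphere_0 empty_iff)
  obtain a where a: "a \<in> sphere 0 1" "\<forall>u\<in>sphere 0 1. h a \<le> h u"
    using continuous_attains_inf[OF compact_sphere sne sup_cont[OF bO neO]] unfolding h_def by blast
  have na: "norm a = 1" using a(1) by simp
  have rO: "(INF u\<in>sphere 0 1. support_fun \<Omega> u) = h a"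
  proof (rule antisym)
    show "(INF u\<in>sphere 0 1. support_fun \<Omega> u) \<le> h a"
      unfolding h_def by (rule cINF_lower[OF _ a(1)]) (use h0 in \<open>auto simp: h_def bdd_below_def\<close>)
    show "h a \<le> (INF u\<in>sphere 0 1. support_fun \<Omega> u)"
      by (rule cINF_greatest[OF sne]) (use a(2) in \<open>simp add: h_def\<close>)
  qed
  have dpos: "DIM('a) > 0" by simp
  have gen: "\<exists>P. polytope P \<and> invariant_under S P \<and> \<Omega> \<subseteq> P \<and> cball 0 R \<subseteq> P \<and>
      F_minf P = Vol P / R ^ DIM('a)" if R: "R > 0" "h a \<le> R" for R
  proof -
    define P where "P = {x. \<forall>y\<in>{\<phi> a |\<phi>. \<phi> \<in> S}. inner y x \<le> R}"
    note pp = P_props[OF assms(1,2,4) na R(1), folded P_def]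
    have bP: "bounded P" using pp(1) polytope_imp_compact compact_imp_bounded by blast
    have sub: "\<Omega> \<subseteq> P"
    proof
      fix x assume x: "x \<in> \<Omega>"
      have "inner y x \<le> R" if yO: "y \<in> {\<phi> a |\<phi>. \<phi> \<in> S}" for y
      proof -
        obtain \<phi> where ph: "\<phi> \<in> S" "y = \<phi> a" using yO by blast
        have "inv \<phi> ` \<Omega> = \<Omega>" using cb(5) grp(2)[OF assms(2) ph(1)] unfolding invariant_under_def by blast
        then have ix: "inv \<phi> x \<in> \<Omega>" using x by blast
        have "inner y x = inner (\<phi> a) (\<phi> (inv \<phi> x))" using grp(3)[OF assms(2) ph(1)] ph(2) by simp
        also have "\<dots> = inner a (inv \<phi> x)" using grp(5)[OF assms(2) ph(1)] by simp
        also have "\<dots> = inner (inv \<phi> x) a" by (simp add: inner_commute)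
        also have "\<dots> \<le> h a" unfolding h_def by (rule sup_ge[OF bO ix])
        finally show ?thesis using R(2) by simp
      qed
      then show "x \<in> P" unfolding P_def by blast
    qed
    have infP: "(INF u\<in>sphere 0 1. support_fun P u) = R"
    proof (rule antisym)
      have "support_fun P a \<le> R"
        by (rule sup_le) (use pp(3) R(1) pp(4) in \<open>auto simp: inner_commute\<close>)
      moreover have "(INF u\<in>sphere 0 1. support_fun P u) \<le> support_fun P a"
      proof (rule cINF_lower[OF _ a(1)])
        show "bdd_below (support_fun P ` sphere 0 1)"
        proof (rule bdd_belowI2)
          fix u :: 'a assume "u \<in> sphere 0 1"
          have "(0::'a) \<in> P" using pp(3) R(1) by auto
          then show "0 \<le> support_fun P u" using sup_ge[OF bP, of 0 u] by simp
        qed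
      qed
      ultimately show "(INF u\<in>sphere 0 1. support_fun P u) \<le> R" by simp
      show "R \<le> (INF u\<in>sphere 0 1. support_fun P u)"
      proof (rule cINF_greatest[OF sne])
        fix u :: 'a assume u: "u \<in> sphere 0 1"
        then have "R *\<^sub>R u \<in> P" using pp(3) R(1) by auto
        then have "inner (R *\<^sub>R u) u \<le> support_fun P u" by (rule sup_ge[OF bP])
        moreover have "inner (R *\<^sub>R u) u = R" using u by (simp add: power2_norm_eq_inner[symmetric])
        ultimately show "R \<le> support_fun P u" by linarith
      qed
    qed
    show ?thesis
      by (rule exI[of _ P]) (use pp(1,2,3) sub infP in \<open>simp add: F_minf_def\<close>)
  qed
  show ?thesis
  proof (cases "h a = 0")
    case True
    obtain P where P: "polytope P" "invariant_under S P" "\<Omega> \<subseteq> P" "cball 0 1 \<subseteq> P"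
      "F_minf P = Vol P / 1 ^ DIM('a)"
      using gen[of 1] True by auto
    have "F_minf \<Omega> = 0" using True rO dpos by (simp add: F_minf_def)
    have "measure lebesgue (ball (0::'a) 1) \<le> measure lebesgue P"
      by (rule measure_mono_fmeasurable) (use P(4) polytope_imp_compact[OF P(1)] lmeasurable_compact in auto)
    moreover have "measure lebesgue (ball (0::'a) 1) > 0" by (rule ball_meas_pos) simp
    ultimately have "measure lebesgue P > 0" by linarith
    then have "F_minf P > 0" using P(5) dpos by (simp add: Vol_def)
    then show ?thesis using P \<open>F_minf \<Omega> = 0\<close> by auto
  next
    case False
    then have hp: "h a > 0" using h0[of a] by simp
    obtain P where P: "polytope P" "invariant_under S P" "\<Omega> \<subseteq> P" "cball 0 (h a) \<subseteq> P"
      "F_minf P = Vol P / (h a) ^ DIM('a)"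
      using gen[of "h a"] hp by auto
    have FO: "F_minf \<Omega> = Vol \<Omega> / (h a) ^ DIM('a)" using rO by (simp add: F_minf_def)
    have cP: "compact P" "convex P" using P(1) polytope_imp_compact polytope_imp_convex by blast+
    have "P \<noteq> \<Omega>" using P(1) assms(6) by blast
    then obtain x where x: "x \<in> P" "x \<notin> \<Omega>" using P(3) by blast
    obtain e where e: "e > 0" "ball x e \<inter> \<Omega> = {}"
    proof -
      have "open (- \<Omega>)" using cb(1) compact_imp_closed by blast
      then obtain e where "e > 0" "ball x e \<subseteq> - \<Omega>" using x(2) open_contains_ball by blast
      then show ?thesis using that by blast
    qed
    have intP: "interior P \<noteq> {}"
    proof -
      have "ball 0 (h a) \<subseteq> P" using P(4) by auto
      then have "ball 0 (h a) \<subseteq> interior P" using interior_maximal by blast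
      then show ?thesis using hp by auto
    qed
    have "x \<in> closure (interior P)"
      using convex_closure_interior[OF cP(2) intP] x(1) closure_subset by blast
    then obtain z where z: "z \<in> interior P" "dist z x < e"
      using closure_approachable e(1) by blast
    have "open (interior P \<inter> ball x e)" by blast
    moreover have "z \<in> interior P \<inter> ball x e" using z by (simp add: dist_commute)
    ultimately obtain e2 where e2: "e2 > 0" "ball z e2 \<subseteq> interior P \<inter> ball x e"
      using open_contains_ball by blast
    let ?B = "ball z e2"
    have BP: "?B \<subseteq> P" using e2(2) interior_subset by blast
    have dis: "\<Omega> \<inter> ?B = {}" using e2(2) e(2) by blast
    have mO: "\<Omega> \<in> lmeasurable" using cb(1) lmeasurable_compact by blast
    have mP: "P \<in> lmeasurable" using cP(1) lmeasurable_compact by blast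
    have mB: "?B \<in> lmeasurable" by simp
    have "measure lebesgue (\<Omega> \<union> ?B) = measure lebesgue \<Omega> + measure lebesgue ?B"
      by (rule measure_Union) (use mO mB dis in \<open>auto simp: fmeasurable_def\<close>)
    moreover have "measure lebesgue (\<Omega> \<union> ?B) \<le> measure lebesgue P"
      by (rule measure_mono_fmeasurable) (use P(3) BP mO mB mP in auto)
    moreover have "measure lebesgue ?B > 0" using ball_meas_pos e2(1) by blast
    ultimately have "measure lebesgue \<Omega> < measure lebesgue P" by linarith
    then have "Vol \<Omega> < Vol P" using dpos by (simp add: Vol_def)
    then have "F_minf \<Omega> < F_minf P" using FO P(5) hp by (simp add: divide_strict_right_mono)
    then show ?thesis using P by blast
  qed
qed

end
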